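(* Let $(r(k))_{k\ge 0}$ be arbitrary elements of a commutative ring, and define numbers $b(n,k)$ for integers $n\ge 0$, $k\ge -1$ by $b(0,k)=[k=0]$, $b(n,-1)=0$, and for $n>0$, $k\ge 0$, $$b(n,k)=b(n-1,k-1)+r(k)\,b(n-1,k+1).$$ Then for all integers $n,\ell\ge 0$, $$\sum_{k=0}^{\min(n,\ell)} b(2n,2k)\,b(2\ell,2k)\prod_{j=0}^{2k-1} r(j)=b(2n+2\ell,0).$$
   Context: $[P]$ denotes the Iverson bracket (1 if $P$ is true, 0 otherwise). An empty product equals $1$. *)

theory Defs
  imports Main
begin

text \<open>b r n k for n, k >= 0; the boundary value b(n,-1)=0 is built into
  the recursion (the term b(n-1,k-1) is read as 0 when k = 0).\<close>
fun bnum :: "(nat \<Rightarrow> 'a::comm_ring_1) \<Rightarrow> nat \<Rightarrow> nat \<Rightarrow> 'a" where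
  "bnum r 0 k = (if k = 0 then 1 else 0)"
| "bnum r (Suc n) k = (if k = 0 then 0 else bnum r n (k - 1)) + r k * bnum r n (k + 1)"

end

theory Submission
  imports Defs
begin

lemma b_big: "n < k \<Longrightarrow> bnum r n k = 0"
  by (induction n arbitrary: k) auto

lemma b_odd: "odd (n + k) \<Longrightarrow> bnum r n k = 0"
  by (induction n arbitrary: k) (auto simp: b_big intro: odd_pos)

definition cc :: "(nat \<Rightarrow> 'a::comm_ring_1) \<Rightarrow> nat \<Rightarrow> nat \<Rightarrow> 'a" where
  "cc r p h = bnum r p h * (\<Prod>j = 0..<h. r j)"

lemma cc_step: "cc r (Suc p) h = cc r p (Suc h) + (if h = 0 then 0 else r (h - 1) * cc r p (h - 1))"
  by (cases h) (auto simp: cc_def algebra_simps)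

lemma cc_big: "p < h \<Longrightarrow> cc r p h = 0"
  by (simp add: cc_def b_big)

lemma key: "bnum r (m + p) 0 = (\<Sum>h<m+p+1. bnum r m h * cc r p h)"
proof (induction m arbitrary: p)
  case 0
  have "(\<Sum>h<p+1. bnum r 0 h * cc r p h) = (\<Sum>h\<in>{0}. bnum r 0 h * cc r p h)"
    by (rule sum.mono_neutral_right) auto
  then show ?case by (simp add: cc_def)
next
  case (Suc m)
  define M where "M = m + p + 1"
  have "bnum r (Suc m + p) 0 = bnum r (m + Suc p) 0" by simp
  also have "\<dots> = (\<Sum>h<Suc M. bnum r m h * cc r (Suc p) h)"
    using Suc.IH[of "Suc p"] by (simp add: M_def)
  also have "\<dots> = (\<Sum>h<Suc M. bnum r m h * cc r p (Suc h))
       + (\<Sum>h<Suc M. bnum r m h * (if h = 0 then 0 else r (h - 1) * cc r p (h - 1)))"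
    by (simp add: cc_step distrib_left sum.distrib)
  also have "(\<Sum>h<Suc M. bnum r m h * cc r p (Suc h)) = (\<Sum>h<M. bnum r m h * cc r p (Suc h))"
    by (simp add: M_def b_big)
  also have "(\<Sum>h<Suc M. bnum r m h * (if h = 0 then 0 else r (h - 1) * cc r p (h - 1)))
      = (\<Sum>h<M. bnum r m (Suc h) * (r h * cc r p h))"
    by (subst sum.lessThan_Suc_shift) simp
  also have "(\<Sum>h<M. bnum r m (Suc h) * (r h * cc r p h)) = (\<Sum>h<Suc M. r h * bnum r m (Suc h) * cc r p h)"
    by (simp add: M_def b_big algebra_simps)
  also have "(\<Sum>h<M. bnum r m h * cc r p (Suc h)) =
      (\<Sum>h<Suc M. (if h = 0 then 0 else bnum r m (h - 1)) * cc r p h)"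
    by (subst sum.lessThan_Suc_shift) simp
  also have "(\<Sum>h<Suc M. (if h = 0 then 0 else bnum r m (h - 1)) * cc r p h)
      + (\<Sum>h<Suc M. r h * bnum r m (Suc h) * cc r p h) = (\<Sum>h<Suc M. bnum r (Suc m) h * cc r p h)"
    by (simp add: sum.distrib[symmetric] algebra_simps)
  finally show ?case by (simp add: M_def)
qed

theorem lemma1:
  fixes r :: "nat \<Rightarrow> 'a::comm_ring_1" and n l :: nat
  shows "(\<Sum>k = 0..min n l. bnum r (2*n) (2*k) * bnum r (2*l) (2*k) * (\<Prod>j = 0..<2*k. r j))
         = bnum r (2*n + 2*l) 0"
proof -
  define g where "g h = bnum r (2*n) h * cc r (2*l) h" for h
  have "(\<Sum>k = 0..min n l. bnum r (2*n) (2*k) * bnum r (2*l) (2*k) * (\<Prod>j = 0..<2*k. r j))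
      = (\<Sum>k = 0..min n l. g (2*k))"
    by (simp add: g_def cc_def mult.assoc)
  also have "\<dots> = (\<Sum>h\<in>(\<lambda>k. 2*k) ` {0..min n l}. g h)"
    by (subst sum.reindex) (auto simp: inj_on_def)
  also have "\<dots> = (\<Sum>h<2*n+2*l+1. g h)"
  proof (rule sum.mono_neutral_left)
    show "\<forall>i\<in>{..<2 * n + 2 * l + 1} - (\<lambda>k. 2*k) ` {0..min n l}. g i = 0"
    proof
      fix i assume i: "i \<in> {..<2 * n + 2 * l + 1} - (\<lambda>k. 2*k) ` {0..min n l}"
      show "g i = 0"
      proof (cases "even i")
        case True
        then obtain k where k: "i = 2*k" by blast
        have "k \<notin> {0..min n l}" using i k by auto
        then have "k > min n l" by auto
        then have "2*n < i \<or> 2*l < i" using k by auto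
        then show ?thesis by (auto simp: g_def cc_big b_big)
      next
        case False
        then show ?thesis by (simp add: g_def b_odd)
      qed
    qed
  qed auto
  also have "\<dots> = bnum r (2*n + 2*l) 0"
    using key[of r "2*n" "2*l"] by (simp add: g_def)
  finally show ?thesis .
qed

end
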